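(* Let $G$ be a graph with $n$ vertices and vertex degree sequence $d_1(G)\geq d_2(G)\geq \cdots \geq d_n(G)$, let $\mathcal{D}(G)$ be its double graph, and let $0\leq \alpha \leq 1$. Then $$S_{k}(A_{\alpha}(\mathcal{D}(G)))\leq \begin{cases} 4\sum_{i=1}^{k/2}d_i(G)+2(1-\alpha)S_k(A(G)), & \text{if } 1 < k< n \text{ is even};\\ 4\sum_{i=1}^{(k-1)/2}d_i(G)+2d_{(k+1)/2}(G)+2(1-\alpha)S_k(A(G)), & \text{if } 1 \leq k< n \text{ is odd};\\ 4\sum_{i=1}^{k/2}d_i(G), & \text{if } n \leq k\leq 2n \text{ is even};\\ 4\sum_{i=1}^{(k-1)/2}d_i(G)+2d_{(k+1)/2}(G), & \text{if } n \leq k\leq 2n \text{ is odd}. \end{cases}$$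
   Context: All graphs are simple and undirected. $A(G)$ is the adjacency matrix, $D(G)$ the diagonal degree matrix, and $A_{\alpha}(G)=\alpha D(G)+(1-\alpha)A(G)$. For a real symmetric matrix $M$ with eigenvalues $\lambda_1(M)\geq\cdots\geq\lambda_N(M)$, $S_k(M)=\sum_{i=1}^k\lambda_i(M)$. The double graph $\mathcal{D}(G)$ is obtained by taking two copies of $G$ and joining each vertex in one copy with the neighbors of the corresponding vertex in the other copy (so $A(\mathcal{D}(G))=\begin{pmatrix}1&1\\1&1\end{pmatrix}\otimes A(G)$). *)

theory Defs
  imports "Jordan_Normal_Form.Char_Poly"
begin

definition simple_graph :: "nat \<Rightarrow> (nat \<Rightarrow> nat \<Rightarrow> bool) \<Rightarrow> bool" where
  "simple_graph n E \<longleftrightarrow> (\<forall>i<n. \<forall>j<n. E i j = E j i) \<and> (\<forall>i<n. \<not> E i i)"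

definition degree :: "nat \<Rightarrow> (nat \<Rightarrow> nat \<Rightarrow> bool) \<Rightarrow> nat \<Rightarrow> nat" where
  "degree n E v = card {u \<in> {0..<n}. E v u}"

(* degree sequence sorted non-increasingly; d_i(G) = degseq n E ! (i - 1) *)
definition degseq :: "nat \<Rightarrow> (nat \<Rightarrow> nat \<Rightarrow> bool) \<Rightarrow> nat list" where
  "degseq n E = rev (sort (map (degree n E) [0..<n]))"

definition dg :: "nat \<Rightarrow> (nat \<Rightarrow> nat \<Rightarrow> bool) \<Rightarrow> nat \<Rightarrow> real" where
  "dg n E i = real (degseq n E ! (i - 1))"

definition adj_mat :: "nat \<Rightarrow> (nat \<Rightarrow> nat \<Rightarrow> bool) \<Rightarrow> real mat" where
  "adj_mat n E = mat n n (\<lambda>(i, j). if E i j then 1 else 0)"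

definition deg_mat :: "nat \<Rightarrow> (nat \<Rightarrow> nat \<Rightarrow> bool) \<Rightarrow> real mat" where
  "deg_mat n E = mat n n (\<lambda>(i, j). if i = j then real (degree n E i) else 0)"

definition A_alpha :: "real \<Rightarrow> nat \<Rightarrow> (nat \<Rightarrow> nat \<Rightarrow> bool) \<Rightarrow> real mat" where
  "A_alpha \<alpha> n E = \<alpha> \<cdot>\<^sub>m deg_mat n E + (1 - \<alpha>) \<cdot>\<^sub>m adj_mat n E"

(* Double graph of (n, E): vertices {0..<2n}; vertex i is a copy of i mod n;
   i ~ j iff (i mod n) ~ (j mod n) in G, so A(D(G)) = [[1,1],[1,1]] \<otimes> A(G). *)
definition double_edges :: "nat \<Rightarrow> (nat \<Rightarrow> nat \<Rightarrow> bool) \<Rightarrow> nat \<Rightarrow> nat \<Rightarrow> bool" where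
  "double_edges n E i j = E (i mod n) (j mod n)"

(* eigenvalues of a real square matrix whose characteristic polynomial splits over the reals
   (true for real symmetric matrices), listed with multiplicity in non-increasing order *)
definition eigvals :: "real mat \<Rightarrow> real list" where
  "eigvals M = (THE xs. sorted (rev xs) \<and>
       char_poly M = (\<Prod>a\<leftarrow>xs. [:- a, 1:]))"

definition S :: "nat \<Rightarrow> real mat \<Rightarrow> real" where
  "S k M = (\<Sum>i<k. eigvals M ! i)"

end

theory Submission
  imports Defs
begin

lemma mult_vec_entry:
  fixes A :: "'a::comm_ring_1 mat"
  assumes "A \<in> carrier_mat n n" "v \<in> carrier_vec n" "p < n"
  shows "(A *\<^sub>v v) $ p = (\<Sum>q<n. A $$ (p,q) * v $ q)"
  using assms by (simp add: index_mult_mat_vec scalar_prod_def lessThan_atLeast0)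

lemma real_root_of_sym:
  fixes A :: "real mat"
  assumes A: "A \<in> carrier_mat n n" and sym: "\<And>i j. i<n \<Longrightarrow> j<n \<Longrightarrow> A$$(i,j) = A$$(j,i)"
  and root: "poly (char_poly (map_mat complex_of_real A)) a = 0"
  shows "Im a = 0"
proof -
  let ?C = "map_mat complex_of_real A"
  have C: "?C \<in> carrier_mat n n" using A by simp
  from root eigenvalue_root_char_poly[OF C] have "eigenvalue ?C a" by simp
  then obtain v where v: "v \<in> carrier_vec n" "v \<noteq> 0\<^sub>v n" "?C *\<^sub>v v = a \<cdot>\<^sub>v v"
    unfolding eigenvalue_def eigenvector_def using C by auto
  have ev: "(\<Sum>q<n. complex_of_real (A$$(p,q)) * v$q) = a * v$p" if p: "p<n" for p
  proof -
    have "(?C *\<^sub>v v) $ p = (\<Sum>q<n. ?C $$ (p,q) * v $ q)" by (rule mult_vec_entry[OF C v(1) p])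
    also have "\<dots> = (\<Sum>q<n. complex_of_real (A$$(p,q)) * v$q)" using A p by (intro sum.cong) auto
    finally show ?thesis using v(3) v(1) p by simp
  qed
  define s where "s = (\<Sum>p<n. cnj (v$p) * (\<Sum>q<n. complex_of_real (A$$(p,q)) * v$q))"
  define r where "r = (\<Sum>p<n. (cmod (v$p))^2)"
  have s1: "s = a * complex_of_real r"
  proof -
    have "s = (\<Sum>p<n. a * (v$p * cnj (v$p)))" unfolding s_def using ev by (intro sum.cong) (auto simp: algebra_simps)
    also have "\<dots> = (\<Sum>p<n. a * complex_of_real ((cmod (v$p))^2))" by (simp only: complex_norm_square)
    also have "\<dots> = a * complex_of_real r" unfolding r_def of_real_sum sum_distrib_left ..
    finally show ?thesis .
  qed
  have "cnj s = (\<Sum>p<n. \<Sum>q<n. v$p * complex_of_real (A$$(p,q)) * cnj (v$q))"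
    unfolding s_def by (simp add: sum_distrib_left mult.commute mult.left_commute)
  also have "\<dots> = (\<Sum>q<n. \<Sum>p<n. v$p * complex_of_real (A$$(p,q)) * cnj (v$q))"
    by (rule sum.swap)
  also have "\<dots> = s" unfolding s_def sum_distrib_left
    by (intro sum.cong refl) (auto simp: sym mult.commute mult.left_commute)
  finally have "cnj s = s" .
  hence "Im s = 0" by (metis cnj.simps(2) complex.expand neg_equal_zero)
  hence "Im a * r = 0" using s1 by simp
  moreover have "r > 0"
  proof -
    obtain p where p: "p < n" "v $ p \<noteq> 0" using v(1,2) by (metis vec_eq_iff carrier_vecD index_zero_vec(1) index_zero_vec(2))
    have "(cmod (v$p))^2 \<le> r" unfolding r_def
      by (rule member_le_sum) (use p in auto)
    moreover have "(cmod (v$p))^2 > 0" using p by simp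
    ultimately show ?thesis by linarith
  qed
  ultimately show ?thesis by simp
qed

lemma sym_has_real_root:
  fixes A :: "real mat"
  assumes A: "A \<in> carrier_mat n n" and sym: "\<And>i j. i<n \<Longrightarrow> j<n \<Longrightarrow> A$$(i,j) = A$$(j,i)"
  and n: "n > 0"
  shows "\<exists>r. poly (char_poly A) r = 0"
proof -
  let ?C = "map_mat complex_of_real A"
  have C: "?C \<in> carrier_mat n n" using A by simp
  from char_poly_factorized[OF C] obtain as where as: "char_poly ?C = (\<Prod>a\<leftarrow>as. [:- a, 1:])" "length as = n" by auto
  then obtain a rest where "as = a # rest" using n by (cases as) auto
  hence root: "poly (char_poly ?C) a = 0" using as by simp
  have "Im a = 0" by (rule real_root_of_sym[OF A sym root])
  hence a: "a = complex_of_real (Re a)" by (simp add: complex_eq_iff)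
  have "char_poly ?C = map_poly complex_of_real (char_poly A)"
    using of_real_hom.char_poly_hom[OF A] by simp
  hence "complex_of_real (poly (char_poly A) (Re a)) = 0"
    using root a by (metis of_real_hom.poly_map_poly)
  thus ?thesis by auto
qed



definition symf :: "nat \<Rightarrow> (nat\<Rightarrow>nat\<Rightarrow>real) \<Rightarrow> bool" where
  "symf N M \<longleftrightarrow> (\<forall>p<N. \<forall>q<N. M p q = M q p)"
definition orthc :: "nat \<Rightarrow> (nat\<Rightarrow>nat\<Rightarrow>real) \<Rightarrow> bool" where
  "orthc N P \<longleftrightarrow> (\<forall>i<N. \<forall>j<N. (\<Sum>p<N. P p i * P p j) = (if i = j then 1 else 0))"
definition orthr :: "nat \<Rightarrow> (nat\<Rightarrow>nat\<Rightarrow>real) \<Rightarrow> bool" where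
  "orthr N P \<longleftrightarrow> (\<forall>p<N. \<forall>q<N. (\<Sum>j<N. P p j * P q j) = (if p = q then 1 else 0))"
definition decomp :: "nat \<Rightarrow> (nat\<Rightarrow>nat\<Rightarrow>real) \<Rightarrow> (nat\<Rightarrow>nat\<Rightarrow>real) \<Rightarrow> (nat \<Rightarrow> real) \<Rightarrow> bool" where
  "decomp N M P l \<longleftrightarrow> (\<forall>p<N. \<forall>q<N. M p q = (\<Sum>j<N. P p j * l j * P q j))"
definition sortd :: "nat \<Rightarrow> (nat \<Rightarrow> real) \<Rightarrow> bool" where
  "sortd N l \<longleftrightarrow> (\<forall>i j. i \<le> j \<longrightarrow> j < N \<longrightarrow> l j \<le> l i)"

lemma min_eigvec:
  assumes sym: "symf N M" and N: "N > 0"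
  shows "\<exists>e v. (\<Sum>p<N. v p ^ 2) = 1 \<and> (\<forall>p<N. (\<Sum>q<N. M p q * v q) = e * v p) \<and>
     (\<forall>e' v'. (\<exists>p<N. v' p \<noteq> 0) \<longrightarrow> (\<forall>p<N. (\<Sum>q<N. M p q * v' q) = e' * v' p) \<longrightarrow> e \<le> e')"
proof -
  define A where "A = mat N N (\<lambda>(i,j). M i j)"
  have A: "A \<in> carrier_mat N N" unfolding A_def by simp
  have Asym: "\<And>i j. i<N \<Longrightarrow> j<N \<Longrightarrow> A$$(i,j) = A$$(j,i)" using sym unfolding A_def symf_def by simp
  define R where "R = {r. poly (char_poly A) r = 0}"
  have cp0: "char_poly A \<noteq> 0" using degree_monic_char_poly[OF A] by auto
  have finR: "finite R" unfolding R_def using poly_roots_finite[OF cp0] .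
  have neR: "R \<noteq> {}" unfolding R_def using sym_has_real_root[OF A Asym N] by auto
  define e where "e = Min R"
  have "e \<in> R" unfolding e_def using finR neR by simp
  hence "eigenvalue A e" unfolding R_def using eigenvalue_root_char_poly[OF A] by simp
  then obtain w where w: "w \<in> carrier_vec N" "w \<noteq> 0\<^sub>v N" "A *\<^sub>v w = e \<cdot>\<^sub>v w"
    unfolding eigenvalue_def eigenvector_def using A by auto
  have ew: "(\<Sum>q<N. M p q * w$q) = e * w$p" if p: "p<N" for p
  proof -
    have "(A *\<^sub>v w) $ p = (\<Sum>q<N. A $$ (p,q) * w $ q)" by (rule mult_vec_entry[OF A w(1) p])
    also have "\<dots> = (\<Sum>q<N. M p q * w$q)" using p unfolding A_def by (intro sum.cong) auto
    finally show ?thesis using w(3) w(1) p by simp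
  qed
  define r where "r = (\<Sum>p<N. (w$p)^2)"
  have rpos: "r > 0"
  proof -
    obtain p where p: "p < N" "w $ p \<noteq> 0" using w(1,2) by (metis vec_eq_iff carrier_vecD index_zero_vec(1) index_zero_vec(2))
    have "(w$p)^2 \<le> r" unfolding r_def by (rule member_le_sum) (use p in auto)
    moreover have "(w$p)^2 > 0" using p by simp
    ultimately show ?thesis by linarith
  qed
  define v where "v = (\<lambda>p. w$p / sqrt r)"
  have v1: "(\<Sum>p<N. v p ^ 2) = 1"
    unfolding v_def using rpos by (simp add: power_divide sum_divide_distrib[symmetric] r_def[symmetric])
  have v2: "\<forall>p<N. (\<Sum>q<N. M p q * v q) = e * v p"
  proof (intro allI impI)
    fix p assume p: "p < N"
    have "(\<Sum>q<N. M p q * v q) = (\<Sum>q<N. M p q * w$q) / sqrt r" unfolding v_def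
      by (simp add: sum_divide_distrib)
    also have "\<dots> = e * v p" using ew[OF p] unfolding v_def by simp
    finally show "(\<Sum>q<N. M p q * v q) = e * v p" .
  qed
  have v3: "e \<le> e'" if nz: "\<exists>p<N. v' p \<noteq> 0" and ev: "\<forall>p<N. (\<Sum>q<N. M p q * v' q) = e' * v' p" for e' v'
  proof -
    define u where "u = vec N v'"
    have u: "u \<in> carrier_vec N" unfolding u_def by simp
    have "u \<noteq> 0\<^sub>v N" using nz unfolding u_def by (auto simp: vec_eq_iff)
    moreover have "A *\<^sub>v u = e' \<cdot>\<^sub>v u"
    proof (rule eq_vecI)
      fix p assume "p < dim_vec (e' \<cdot>\<^sub>v u)"
      hence p: "p < N" unfolding u_def by simp
      have "(A *\<^sub>v u) $ p = (\<Sum>q<N. A $$ (p,q) * u $ q)" by (rule mult_vec_entry[OF A u p])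
      also have "\<dots> = (\<Sum>q<N. M p q * v' q)" using p unfolding A_def u_def by (intro sum.cong) auto
      finally show "(A *\<^sub>v u) $ p = (e' \<cdot>\<^sub>v u) $ p" using ev p unfolding u_def by simp
    qed (use A u in auto)
    ultimately have "eigenvector A u e'" unfolding eigenvector_def using A u by auto
    hence "eigenvalue A e'" unfolding eigenvalue_def by auto
    hence "e' \<in> R" unfolding R_def using eigenvalue_root_char_poly[OF A] by simp
    thus ?thesis unfolding e_def using finR by simp
  qed
  show ?thesis using v1 v2 v3 by blast
qed



lemma order_prod_linear: "order x (\<Prod>a\<leftarrow>xs. [:- a, 1:]) = count (mset xs) (x::real)"
proof (induction xs)
  case Nil
  then show ?case by (simp add: order_0I)
next
  case (Cons a xs)
  have n1: "[:- a, 1::real:] \<noteq> 0" by simp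
  have n2: "(\<Prod>a\<leftarrow>xs. [:- a, 1::real:]) \<noteq> 0" by (auto simp: prod_list_zero_iff)
  have nz: "[:- a, 1::real:] * (\<Prod>a\<leftarrow>xs. [:- a, 1::real:]) \<noteq> 0" using no_zero_divisors[OF n1 n2] .
  have "order x (\<Prod>a\<leftarrow>a#xs. [:- a, 1:]) = order x ([:- a, 1:] * (\<Prod>a\<leftarrow>xs. [:- a, 1:]))" by simp
  also have "\<dots> = order x [:- a, 1:] + order x (\<Prod>a\<leftarrow>xs. [:- a, 1:])"
    by (rule order_mult[OF nz])
  finally show ?case using Cons by (simp add: order_linear')
qed
lemma prod_linear_eq_sorted:
  assumes "(\<Prod>a\<leftarrow>xs. [:- a, 1:]) = (\<Prod>a\<leftarrow>ys. [:- a, 1::real:])"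
    and "sorted (rev xs)" and "sorted (rev ys)"
  shows "xs = ys"
proof -
  have "count (mset xs) x = count (mset ys) x" for x
    using order_prod_linear[of x xs] order_prod_linear[of x ys] assms(1) by simp
  hence "mset xs = mset ys" by (rule multiset_eqI)
  hence m: "mset (rev xs) = mset (rev ys)" by simp
  have "sort (rev ys) = rev xs" by (rule properties_for_sort) (use m assms(2) in auto)
  moreover have "sort (rev ys) = rev ys" using assms(3) by (simp add: sorted_sort_id)
  ultimately show ?thesis by simp
qed

lemma sum_delta_right: "(\<Sum>m<(N::nat). f m * (if m = k then g m else 0)) = (if k < N then f k * g k else (0::real))"
proof -
  have "(\<Sum>m<N. f m * (if m = k then g m else 0)) = (\<Sum>m\<in>{..<N}. if m = k then f k * g k else 0)"
    by (rule sum.cong) auto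
  also have "\<dots> = (if k < N then f k * g k else 0)" by (simp add: sum.delta)
  finally show ?thesis .
qed
lemma eigvals_link:
  fixes A :: "real mat"
  assumes A: "A \<in> carrier_mat N N" and oc: "orthc N P" and orr: "orthr N P"
    and dc: "decomp N (\<lambda>i j. A$$(i,j)) P l" and sd: "sortd N l"
  shows "eigvals A = map l [0..<N]"
proof -
  define Pm where "Pm = mat N N (\<lambda>(i,j). P i j)"
  define D where "D = mat N N (\<lambda>(i,j). if i = j then l i else 0)"
  have Pm: "Pm \<in> carrier_mat N N" and Pt: "Pm\<^sup>T \<in> carrier_mat N N" and D: "D \<in> carrier_mat N N"
    unfolding Pm_def D_def by auto
  have PPt: "Pm * Pm\<^sup>T = 1\<^sub>m N"
  proof (rule eq_matI)
    fix i j assume "i < dim_row (1\<^sub>m N)" "j < dim_col (1\<^sub>m N)"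
    then show "(Pm * Pm\<^sup>T) $$ (i,j) = 1\<^sub>m N $$ (i,j)" using orr unfolding orthr_def
      by (simp add: Pm_def scalar_prod_def atLeast0LessThan)
  qed (auto simp: Pm_def)
  have PtP: "Pm\<^sup>T * Pm = 1\<^sub>m N"
  proof (rule eq_matI)
    fix i j assume "i < dim_row (1\<^sub>m N)" "j < dim_col (1\<^sub>m N)"
    then show "(Pm\<^sup>T * Pm) $$ (i,j) = 1\<^sub>m N $$ (i,j)" using oc unfolding orthc_def
      by (simp add: Pm_def scalar_prod_def atLeast0LessThan)
  qed (auto simp: Pm_def)
  have PD: "(Pm * D) $$ (i,k) = P i k * l k" if "i < N" "k < N" for i k
    using that by (simp add: Pm_def D_def scalar_prod_def atLeast0LessThan sum_delta_right)
  have AE: "A = Pm * D * Pm\<^sup>T"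
  proof (rule eq_matI)
    fix i j assume ij: "i < dim_row (Pm * D * Pm\<^sup>T)" "j < dim_col (Pm * D * Pm\<^sup>T)"
    hence i: "i < N" and j: "j < N" using Pm D by auto
    have "(Pm * D * Pm\<^sup>T) $$ (i,j) = (\<Sum>k<N. (Pm * D) $$ (i,k) * P j k)"
      using i j Pm D by (simp add: scalar_prod_def atLeast0LessThan Pm_def)
    also have "\<dots> = (\<Sum>k<N. P i k * l k * P j k)" using PD i by (intro sum.cong) auto
    also have "\<dots> = A $$ (i,j)" using dc i j unfolding decomp_def by simp
    finally show "A $$ (i,j) = (Pm * D * Pm\<^sup>T) $$ (i,j)" by simp
  qed (use A Pm D in auto)
  have "similar_mat A D" unfolding similar_mat_def similar_mat_wit_def
    by (rule exI[of _ Pm], rule exI[of _ "Pm\<^sup>T"]) (use A Pm Pt D PPt PtP AE in \<open>auto simp: Let_def\<close>)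
  hence "char_poly A = char_poly D" by (rule char_poly_similar)
  also have "\<dots> = (\<Prod>a\<leftarrow>diag_mat D. [:- a, 1:])"
    by (rule char_poly_upper_triangular[OF D]) (auto simp: upper_triangular_def D_def)
  also have "diag_mat D = map l [0..<N]" unfolding diag_mat_def D_def by simp
  finally have cp: "char_poly A = (\<Prod>a\<leftarrow>map l [0..<N]. [:- a, 1:])" .
  have srt: "sorted (rev (map l [0..<N]))"
    unfolding sorted_iff_nth_mono using sd unfolding sortd_def by (auto simp: rev_nth)
  show ?thesis unfolding eigvals_def
  proof (rule the_equality)
    show "sorted (rev (map l [0..<N])) \<and> char_poly A = (\<Prod>a\<leftarrow>map l [0..<N]. [:- a, 1:])"
      using srt cp by simp
  next
    fix xs assume h: "sorted (rev xs) \<and> char_poly A = (\<Prod>a\<leftarrow>xs. [:- a, 1:])"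
    show "xs = map l [0..<N]"
    proof (rule prod_linear_eq_sorted)
      show "(\<Prod>a\<leftarrow>xs. [:- a, 1:]) = (\<Prod>a\<leftarrow>map l [0..<N]. [:- a, 1:])"
        using h cp by metis
    qed (use h srt in auto)
  qed
qed



definition mm :: "nat \<Rightarrow> (nat\<Rightarrow>nat\<Rightarrow>real) \<Rightarrow> (nat\<Rightarrow>nat\<Rightarrow>real) \<Rightarrow> nat\<Rightarrow>nat\<Rightarrow>real" where
  "mm N A B = (\<lambda>i j. \<Sum>k<N. A i k * B k j)"
definition tp :: "(nat\<Rightarrow>nat\<Rightarrow>real) \<Rightarrow> nat\<Rightarrow>nat\<Rightarrow>real" where "tp A = (\<lambda>i j. A j i)"
definition idm :: "nat\<Rightarrow>nat\<Rightarrow>real" where "idm = (\<lambda>i j. if i = j then 1 else 0)"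
definition dgm :: "(nat \<Rightarrow> real) \<Rightarrow> nat\<Rightarrow>nat\<Rightarrow>real" where "dgm l = (\<lambda>i j. if i = j then l i else 0)"
definition eqn :: "nat \<Rightarrow> (nat\<Rightarrow>nat\<Rightarrow>real) \<Rightarrow> (nat\<Rightarrow>nat\<Rightarrow>real) \<Rightarrow> bool" where
  "eqn N A B \<longleftrightarrow> (\<forall>i<N. \<forall>j<N. A i j = B i j)"

lemma mm_assoc: "mm N (mm N A B) C = mm N A (mm N B C)"
proof (intro ext)
  fix i j
  have "mm N (mm N A B) C i j = (\<Sum>k<N. \<Sum>m<N. A i m * B m k * C k j)"
    unfolding mm_def by (simp add: sum_distrib_right)
  also have "\<dots> = (\<Sum>m<N. \<Sum>k<N. A i m * B m k * C k j)" by (rule sum.swap)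
  also have "\<dots> = mm N A (mm N B C) i j"
    unfolding mm_def by (simp add: sum_distrib_left mult.assoc)
  finally show "mm N (mm N A B) C i j = mm N A (mm N B C) i j" .
qed

lemma tp_mm: "tp (mm N A B) = mm N (tp B) (tp A)"
  unfolding tp_def mm_def by (simp add: mult.commute)
lemma tp_tp[simp]: "tp (tp A) = A" unfolding tp_def by simp

lemma eqn_refl[simp]: "eqn N A A" unfolding eqn_def by simp
lemma eqn_sym: "eqn N A B \<Longrightarrow> eqn N B A" unfolding eqn_def by simp
lemma eqn_trans[trans]: "eqn N A B \<Longrightarrow> eqn N B C \<Longrightarrow> eqn N A C" unfolding eqn_def by simp
lemma eqn_mm: "eqn N A A' \<Longrightarrow> eqn N B B' \<Longrightarrow> eqn N (mm N A B) (mm N A' B')"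
  unfolding eqn_def mm_def by (auto intro!: sum.cong)
lemma eqn_tp: "eqn N A B \<Longrightarrow> eqn N (tp A) (tp B)"
  unfolding eqn_def tp_def by auto
lemma mm_idl: "eqn N (mm N idm A) A"
  unfolding eqn_def mm_def idm_def by (auto simp: if_distrib[of "\<lambda>x. x * _"] sum.delta cong: if_cong)
lemma mm_idr: "eqn N (mm N A idm) A"
  unfolding eqn_def mm_def idm_def by (auto simp: sum_delta_right)

lemma orthc_eqn: "orthc N P \<longleftrightarrow> eqn N (mm N (tp P) P) idm"
  unfolding orthc_def eqn_def mm_def tp_def idm_def by simp
lemma orthr_eqn: "orthr N P \<longleftrightarrow> eqn N (mm N P (tp P)) idm"
  unfolding orthr_def eqn_def mm_def tp_def idm_def by simp
lemma decomp_eqn: "decomp N M P l \<longleftrightarrow> eqn N M (mm N (mm N P (dgm l)) (tp P))"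
proof -
  have "mm N (mm N P (dgm l)) (tp P) i j = (\<Sum>k<N. P i k * l k * P j k)" for i j
    unfolding mm_def dgm_def tp_def
    by (intro sum.cong refl) (simp add: sum_delta_right)
  thus ?thesis unfolding decomp_def eqn_def by simp
qed
lemma symf_eqn: "symf N M \<longleftrightarrow> eqn N (tp M) M"
  unfolding symf_def eqn_def tp_def by auto

lemma eigcol:
  assumes oc: "orthc N P" and dc: "decomp N M P l" and i: "i < N" and p: "p < N"
  shows "(\<Sum>q<N. M p q * P q i) = l i * P p i"
proof -
  have "(\<Sum>q<N. M p q * P q i) = (\<Sum>q<N. \<Sum>j<N. P p j * l j * (P q j * P q i))"
    using dc p unfolding decomp_def by (intro sum.cong refl) (simp add: sum_distrib_right mult.assoc)
  also have "\<dots> = (\<Sum>j<N. P p j * l j * (\<Sum>q<N. P q j * P q i))"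
    by (subst sum.swap) (simp add: sum_distrib_left)
  also have "\<dots> = (\<Sum>j<N. P p j * l j * (if j = i then 1 else 0))"
    using oc i unfolding orthc_def by (intro sum.cong refl) simp
  also have "\<dots> = l i * P p i" using i by (subst sum_delta_right) simp
  finally show ?thesis .
qed



lemma householder:
  fixes v :: "nat \<Rightarrow> real" and K :: nat
  assumes v1: "(\<Sum>p<Suc K. v p ^ 2) = 1"
  shows "\<exists>H. tp H = H \<and> eqn (Suc K) (mm (Suc K) H H) idm \<and>
     (\<forall>p<Suc K. H p K = v p) \<and> (\<forall>p<Suc K. (\<Sum>q<Suc K. H p q * v q) = idm p K)"
proof -
  define N where "N = Suc K"
  have K: "K < N" unfolding N_def by simp
  define w where "w = (\<lambda>p. v p - idm p K)"
  define ww where "ww = (\<Sum>p<N. w p ^ 2)"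
  define c where "c = (if ww = 0 then 0 else 2 / ww)"
  define H where "H = (\<lambda>p q. idm p q - c * w p * w q)"
  have sid: "(\<Sum>q<N. idm p q * f q) = f p" if "p < N" for p f
    using that unfolding idm_def by (simp add: if_distrib[of "\<lambda>x. x * _"] sum.delta cong: if_cong)
  have sid2: "(\<Sum>q<N. f q * idm q p) = f p" if "p < N" for p f
    using that unfolding idm_def by (simp add: sum_delta_right)
  have Happ: "(\<Sum>q<N. H p q * f q) = f p - c * w p * (\<Sum>q<N. w q * f q)" if p: "p < N" for p f
  proof -
    have "(\<Sum>q<N. H p q * f q) = (\<Sum>q<N. idm p q * f q) - (\<Sum>q<N. c * w p * (w q * f q))"
      unfolding H_def by (simp add: algebra_simps sum_subtractf)
    also have "\<dots> = f p - c * w p * (\<Sum>q<N. w q * f q)" using sid[OF p] by (simp add: sum_distrib_left)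
    finally show ?thesis .
  qed
  have wv: "(\<Sum>q<N. w q * v q) = 1 - v K"
  proof -
    have "(\<Sum>q<N. w q * v q) = (\<Sum>q<N. v q ^ 2) - (\<Sum>q<N. idm q K * v q)"
      unfolding w_def by (simp add: algebra_simps power2_eq_square sum_subtractf)
    also have "(\<Sum>q<N. idm q K * v q) = v K"
      using K unfolding idm_def by (simp add: if_distrib[of "\<lambda>x. x * _"] sum.delta cong: if_cong)
    finally show ?thesis using v1 unfolding N_def by simp
  qed
  have wwv: "ww = 2 - 2 * v K"
  proof -
    have "ww = (\<Sum>q<N. w q * v q - w q * idm q K)"
      unfolding ww_def by (intro sum.cong refl) (simp add: w_def algebra_simps power2_eq_square)
    also have "\<dots> = (\<Sum>q<N. w q * v q) - (\<Sum>q<N. w q * idm q K)" by (rule sum_subtractf)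
    also have "(\<Sum>q<N. w q * idm q K) = w K" by (rule sid2[OF K])
    finally show ?thesis using wv unfolding w_def idm_def by simp
  qed
  have w0: "w p = 0" if "ww = 0" "p < N" for p
  proof -
    have "\<forall>p\<in>{..<N}. w p ^ 2 = 0" using that(1) unfolding ww_def
      by (subst sum_nonneg_eq_0_iff[symmetric]) auto
    thus ?thesis using that(2) by simp
  qed
  have cw: "c * ww = 2" if "ww \<noteq> 0" using that unfolding c_def by simp
  have ccw: "c * (2 - c * ww) = 0" unfolding c_def by simp
  have tpH: "tp H = H" unfolding tp_def H_def idm_def by (auto intro!: ext)
  have HH: "eqn N (mm N H H) idm"
    unfolding eqn_def
  proof (intro allI impI)
    fix p r assume p: "p < N" and r: "r < N"
    have "mm N H H p r = H p r - c * w p * (\<Sum>q<N. w q * H q r)"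
      unfolding mm_def by (rule Happ[OF p])
    also have "(\<Sum>q<N. w q * H q r) = (\<Sum>q<N. H r q * w q)"
      unfolding H_def idm_def by (intro sum.cong) auto
    also have "\<dots> = w r - c * w r * ww" using Happ[OF r, of w] unfolding ww_def by (simp add: power2_eq_square)
    finally have "mm N H H p r = idm p r - c * w p * w r * (2 - c * ww)"
      unfolding H_def by (simp add: algebra_simps)
    moreover have "c * w p * w r * (2 - c * ww) = w p * w r * (c * (2 - c * ww))" by (simp only: ac_simps)
    moreover note ccw
    ultimately show "mm N H H p r = idm p r" by simp
  qed
  have HK: "H p K = v p" if p: "p < N" for p
  proof (cases "ww = 0")
    case True
    then show ?thesis using w0[OF True p] unfolding H_def c_def w_def by simp
  next
    case False
    have "c * w K = -1" using False wwv unfolding c_def w_def idm_def by (simp add: field_simps)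
    have "H p K = idm p K - w p * (c * w K)" unfolding H_def by (simp only: ac_simps)
    also have "\<dots> = v p" using \<open>c * w K = -1\<close> unfolding w_def by simp
    finally show ?thesis .
  qed
  have Hv: "(\<Sum>q<N. H p q * v q) = idm p K" if p: "p < N" for p
  proof -
    have "(\<Sum>q<N. H p q * v q) = v p - c * w p * (1 - v K)" using Happ[OF p] wv by simp
    also have "\<dots> = idm p K"
    proof (cases "ww = 0")
      case True
      then show ?thesis using w0[OF True p] unfolding c_def w_def by simp
    next
      case False
      have "c * (1 - v K) = 1" using False wwv unfolding c_def by (simp add: field_simps)
      have "v p - c * w p * (1 - v K) = v p - w p * (c * (1 - v K))" by (simp only: ac_simps)
      also have "\<dots> = idm p K" using \<open>c * (1 - v K) = 1\<close> unfolding w_def by simp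
      finally show ?thesis .
    qed
    finally show ?thesis .
  qed
  show ?thesis using tpH HH HK Hv unfolding N_def by blast
qed



lemma spectral: "symf N M \<Longrightarrow> \<exists>P l. orthc N P \<and> orthr N P \<and> decomp N M P l \<and> sortd N l"
proof (induction N arbitrary: M)
  case 0
  show ?case by (auto simp: orthc_def orthr_def decomp_def sortd_def)
next
  case (Suc K)
  let ?N = "Suc K"
  have K: "K < ?N" by simp
  obtain e v where v1: "(\<Sum>p<?N. v p ^ 2) = 1" and ev: "\<forall>p<?N. (\<Sum>q<?N. M p q * v q) = e * v p"
    and emin: "\<forall>e' v'. (\<exists>p<?N. v' p \<noteq> 0) \<longrightarrow> (\<forall>p<?N. (\<Sum>q<?N. M p q * v' q) = e' * v' p) \<longrightarrow> e \<le> e'"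
    using min_eigvec[OF Suc.prems] by blast
  obtain H where tpH: "tp H = H" and HH: "eqn ?N (mm ?N H H) idm" and HK: "\<forall>p<?N. H p K = v p"
    and Hv: "\<forall>p<?N. (\<Sum>q<?N. H p q * v q) = idm p K"
    using householder[OF v1] by blast
  define M2 where "M2 = mm ?N H (mm ?N M H)"
  have symM: "eqn ?N (tp M) M" using Suc.prems symf_eqn by blast
  have symM2: "eqn ?N (tp M2) M2"
  proof -
    have "eqn ?N (tp M2) (mm ?N H (mm ?N (tp M) H))" unfolding M2_def by (simp only: tp_mm tpH mm_assoc eqn_refl)
    also have "eqn ?N \<dots> M2" unfolding M2_def by (intro eqn_mm eqn_refl symM)
    finally show ?thesis by simp
  qed
  have M2K: "M2 p K = e * idm p K" if p: "p < ?N" for p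
  proof -
    have "M2 p K = (\<Sum>a<?N. H p a * (\<Sum>b<?N. M a b * H b K))" unfolding M2_def mm_def ..
    also have "\<dots> = (\<Sum>a<?N. H p a * (e * v a))"
      using HK ev by (intro sum.cong refl) simp
    also have "\<dots> = e * (\<Sum>a<?N. H p a * v a)" unfolding sum_distrib_left by (intro sum.cong refl) simp
    also have "\<dots> = e * idm p K" using Hv p by simp
    finally show ?thesis .
  qed
  have M2sym: "M2 p q = M2 q p" if "p < ?N" "q < ?N" for p q
    using symM2 that unfolding eqn_def tp_def by auto
  have "symf K M2" unfolding symf_def using M2sym by auto
  then obtain P1 l1 where oP1: "orthc K P1" and rP1: "orthr K P1" and dP1: "decomp K M2 P1 l1"
    and sP1: "sortd K l1" using Suc.IH by blast
  define Q where "Q = (\<lambda>p j. if p < K \<and> j < K then P1 p j else if p = K \<and> j = K then 1 else (0::real))"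
  define l where "l = (\<lambda>j. if j < K then l1 j else e)"
  have oQ: "orthc ?N Q" unfolding orthc_def
  proof (intro allI impI)
    fix i j assume i: "i < ?N" and j: "j < ?N"
    have "(\<Sum>p<?N. Q p i * Q p j) = (\<Sum>p<K. Q p i * Q p j) + Q K i * Q K j" by simp
    also have "(\<Sum>p<K. Q p i * Q p j) = (if i < K \<and> j < K then (\<Sum>p<K. P1 p i * P1 p j) else 0)"
      unfolding Q_def by (auto intro!: sum.neutral)
    also have "Q K i * Q K j = (if i = K \<and> j = K then 1 else 0)" unfolding Q_def using i j by auto
    finally show "(\<Sum>p<?N. Q p i * Q p j) = (if i = j then 1 else 0)"
      using oP1 i j unfolding orthc_def by (auto simp: less_Suc_eq)
  qed
  have rQ: "orthr ?N Q" unfolding orthr_def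
  proof (intro allI impI)
    fix p q assume p: "p < ?N" and q: "q < ?N"
    have "(\<Sum>j<?N. Q p j * Q q j) = (\<Sum>j<K. Q p j * Q q j) + Q p K * Q q K" by simp
    also have "(\<Sum>j<K. Q p j * Q q j) = (if p < K \<and> q < K then (\<Sum>j<K. P1 p j * P1 q j) else 0)"
      unfolding Q_def by (auto intro!: sum.neutral)
    also have "Q p K * Q q K = (if p = K \<and> q = K then 1 else 0)" unfolding Q_def using p q by auto
    finally show "(\<Sum>j<?N. Q p j * Q q j) = (if p = q then 1 else 0)"
      using rP1 p q unfolding orthr_def by (auto simp: less_Suc_eq)
  qed
  have dQ: "decomp ?N M2 Q l" unfolding decomp_def
  proof (intro allI impI)
    fix p q assume p: "p < ?N" and q: "q < ?N"
    have "(\<Sum>j<?N. Q p j * l j * Q q j) = (\<Sum>j<K. Q p j * l j * Q q j) + Q p K * l K * Q q K" by simp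
    also have "(\<Sum>j<K. Q p j * l j * Q q j) = (if p < K \<and> q < K then (\<Sum>j<K. P1 p j * l1 j * P1 q j) else 0)"
      unfolding Q_def l_def by (auto intro!: sum.neutral)
    also have "Q p K * l K * Q q K = (if p = K \<and> q = K then e else 0)" unfolding Q_def l_def using p q by auto
    finally have eq: "(\<Sum>j<?N. Q p j * l j * Q q j) = (if p < K \<and> q < K then (\<Sum>j<K. P1 p j * l1 j * P1 q j) else 0)
        + (if p = K \<and> q = K then e else 0)" .
    show "M2 p q = (\<Sum>j<?N. Q p j * l j * Q q j)"
    proof (cases "p < K \<and> q < K")
      case True
      then show ?thesis using eq dP1 unfolding decomp_def by auto
    next
      case False
      then have "p = K \<or> q = K" using p q by auto
      then show ?thesis
      proof
        assume "p = K"
        then show ?thesis using eq M2sym[OF p q] M2K[OF q] unfolding idm_def by auto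
      next
        assume "q = K"
        then show ?thesis using eq M2K[OF p] unfolding idm_def by auto
      qed
    qed
  qed
  define P where "P = mm ?N H Q"
  have oP: "orthc ?N P" unfolding orthc_eqn
  proof -
    have "eqn ?N (mm ?N (tp P) P) (mm ?N (tp Q) (mm ?N (mm ?N H H) Q))" unfolding P_def by (simp only: tp_mm tpH mm_assoc eqn_refl)
    also have "eqn ?N \<dots> (mm ?N (tp Q) (mm ?N idm Q))" by (intro eqn_mm eqn_refl HH)
    also have "eqn ?N \<dots> (mm ?N (tp Q) Q)" by (intro eqn_mm eqn_refl mm_idl)
    also have "eqn ?N \<dots> idm" using oQ orthc_eqn by blast
    finally show "eqn ?N (mm ?N (tp P) P) idm" by simp
  qed
  have rP: "orthr ?N P" unfolding orthr_eqn
  proof -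
    have "eqn ?N (mm ?N P (tp P)) (mm ?N H (mm ?N (mm ?N Q (tp Q)) H))" unfolding P_def by (simp only: tp_mm tpH mm_assoc eqn_refl)
    also have "eqn ?N \<dots> (mm ?N H (mm ?N idm H))" using rQ orthr_eqn by (blast intro: eqn_mm eqn_refl)
    also have "eqn ?N \<dots> (mm ?N H H)" by (intro eqn_mm eqn_refl mm_idl)
    also have "eqn ?N \<dots> idm" by (rule HH)
    finally show "eqn ?N (mm ?N P (tp P)) idm" by simp
  qed
  have dP: "decomp ?N M P l" unfolding decomp_eqn
  proof -
    have "eqn ?N M (mm ?N M idm)" by (rule eqn_sym[OF mm_idr])
    also have "eqn ?N \<dots> (mm ?N idm (mm ?N M idm))" by (rule eqn_sym[OF mm_idl])
    also have "eqn ?N \<dots> (mm ?N (mm ?N H H) (mm ?N M (mm ?N H H)))"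
      by (intro eqn_mm eqn_refl eqn_sym[OF HH])
    also have "eqn ?N \<dots> (mm ?N H (mm ?N M2 H))" unfolding M2_def by (simp only: mm_assoc eqn_refl)
    also have "eqn ?N \<dots> (mm ?N H (mm ?N (mm ?N (mm ?N Q (dgm l)) (tp Q)) H))"
      using dQ decomp_eqn by (blast intro: eqn_mm eqn_refl)
    also have "eqn ?N \<dots> (mm ?N (mm ?N P (dgm l)) (tp P))" unfolding P_def by (simp only: tp_mm tpH mm_assoc eqn_refl)
    finally show "eqn ?N M (mm ?N (mm ?N P (dgm l)) (tp P))" .
  qed
  have lge: "e \<le> l i" if i: "i < ?N" for i
  proof -
    have "(\<Sum>p<?N. P p i * P p i) = 1" using oP i unfolding orthc_def by simp
    hence "\<exists>p<?N. P p i \<noteq> 0" by (metis (no_types, lifting) lessThan_iff mult_zero_left sum.neutral zero_neq_one)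
    moreover have "\<forall>p<?N. (\<Sum>q<?N. M p q * P q i) = l i * P p i" using eigcol[OF oP dP i] by blast
    ultimately show ?thesis using emin[THEN spec[where x="l i"], THEN spec[where x="\<lambda>q. P q i"]] by simp
  qed
  have sP: "sortd ?N l" unfolding sortd_def
  proof (intro allI impI)
    fix i j assume ij: "i \<le> j" and j: "j < ?N"
    show "l j \<le> l i"
    proof (cases "j < K")
      case True
      then show ?thesis using sP1 ij unfolding sortd_def l_def by auto
    next
      case False
      then have "l j = e" unfolding l_def by simp
      then show ?thesis using lge[of i] ij j by simp
    qed
  qed
  show ?case using oP rP dP sP by blast
qed



lemma spec_mat:
  fixes A :: "real mat"
  assumes A: "A \<in> carrier_mat N N" and sym: "\<forall>i<N. \<forall>j<N. A$$(i,j) = A$$(j,i)"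
  shows "\<exists>P l. orthc N P \<and> orthr N P \<and> decomp N (\<lambda>i j. A$$(i,j)) P l \<and> sortd N l \<and> eigvals A = map l [0..<N]"
proof -
  have "symf N (\<lambda>i j. A$$(i,j))" using sym unfolding symf_def by simp
  then obtain P l where "orthc N P" "orthr N P" "decomp N (\<lambda>i j. A$$(i,j)) P l" "sortd N l"
    using spectral by blast
  moreover have "eigvals A = map l [0..<N]" by (rule eigvals_link[OF A calculation])
  ultimately show ?thesis by blast
qed

lemma threshold:
  fixes c w :: "'a \<Rightarrow> real"
  assumes fin: "finite I" and w: "\<And>p. p \<in> I \<Longrightarrow> 0 \<le> w p \<and> w p \<le> 1" and sw: "sum w I \<le> k" and t: "t \<ge> 0"
  shows "(\<Sum>p\<in>I. c p * w p) \<le> t * k + (\<Sum>p\<in>I. max (c p - t) 0)"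
proof -
  have el: "c p * w p \<le> t * w p + max (c p - t) 0" if p: "p \<in> I" for p
  proof -
    have w0: "0 \<le> w p" and w1: "w p \<le> 1" using w[OF p] by auto
    have "(c p - t) * w p \<le> max (c p - t) 0 * w p" by (rule mult_right_mono[OF _ w0]) simp
    also have "\<dots> \<le> max (c p - t) 0" using w1 by (simp add: mult_left_le)
    finally show ?thesis by (simp add: algebra_simps)
  qed
  have "(\<Sum>p\<in>I. c p * w p) \<le> (\<Sum>p\<in>I. t * w p + max (c p - t) 0)" by (rule sum_mono[OF el])
  also have "\<dots> = t * sum w I + (\<Sum>p\<in>I. max (c p - t) 0)" by (simp add: sum.distrib sum_distrib_left)
  also have "t * sum w I \<le> t * k" using sw t by (simp add: mult_left_mono)
  finally show ?thesis by simp
qed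

lemma sum_delta_right': "(\<Sum>m<(N::nat). f m * (if k = m then g m else 0)) = (if k < N then f k * g k else (0::real))"
  using sum_delta_right[where N=N and f=f and k=k and g=g] by (simp add: eq_commute)

lemma sum_swap3: "(\<Sum>j\<in>A. \<Sum>p\<in>B. \<Sum>q\<in>C. f j p q) = (\<Sum>p\<in>B. \<Sum>q\<in>C. \<Sum>j\<in>A. (f j p q::real))"
proof -
  have "(\<Sum>j\<in>A. \<Sum>p\<in>B. \<Sum>q\<in>C. f j p q) = (\<Sum>p\<in>B. \<Sum>j\<in>A. \<Sum>q\<in>C. f j p q)" by (rule sum.swap)
  also have "\<dots> = (\<Sum>p\<in>B. \<Sum>q\<in>C. \<Sum>j\<in>A. f j p q)" by (intro sum.cong refl) (rule sum.swap)
  finally show ?thesis .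
qed

lemma sq_sum: "(\<Sum>i\<in>I. a i)^2 = (\<Sum>i\<in>I. \<Sum>j\<in>I. a i * (a j::real))"
  by (simp add: power2_eq_square sum_product)

lemma bessel:
  fixes u :: "nat \<Rightarrow> nat \<Rightarrow> real"
  assumes orth: "\<forall>i<k. \<forall>j<k. (\<Sum>p<N. u p i * u p j) = (if i = j then 1 else 0)"
  shows "(\<Sum>i<k. (\<Sum>p<N. u p i * x p)^2) \<le> (\<Sum>p<N. x p ^ 2)"
proof -
  define c where "c = (\<lambda>i. \<Sum>p<N. u p i * x p)"
  define y where "y = (\<lambda>p. \<Sum>i<k. c i * u p i)"
  have A: "(\<Sum>p<N. x p * y p) = (\<Sum>i<k. c i ^ 2)"
  proof -
    have "(\<Sum>p<N. x p * y p) = (\<Sum>p<N. \<Sum>i<k. c i * (u p i * x p))"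
      unfolding y_def by (simp add: sum_distrib_left ac_simps)
    also have "\<dots> = (\<Sum>i<k. c i * c i)" by (subst sum.swap) (simp add: c_def sum_distrib_left)
    finally show ?thesis by (simp add: power2_eq_square)
  qed
  have B: "(\<Sum>p<N. y p ^ 2) = (\<Sum>i<k. c i ^ 2)"
  proof -
    have "(\<Sum>p<N. y p ^ 2) = (\<Sum>p<N. \<Sum>i<k. \<Sum>j<k. c i * c j * (u p i * u p j))"
      unfolding y_def sq_sum by (simp add: ac_simps)
    also have "\<dots> = (\<Sum>i<k. \<Sum>j<k. c i * c j * (\<Sum>p<N. u p i * u p j))"
      by (simp add: sum_distrib_left sum.swap[of _ "{..<N}"])
    also have "\<dots> = (\<Sum>i<k. \<Sum>j<k. c i * c j * (if i = j then 1 else 0))"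
      using orth by (intro sum.cong refl) simp
    also have "\<dots> = (\<Sum>i<k. c i * c i)" by (intro sum.cong refl) (simp add: sum_delta_right')
    finally show ?thesis by (simp add: power2_eq_square)
  qed
  have "0 \<le> (\<Sum>p<N. (x p - y p)^2)" by (simp add: sum_nonneg)
  also have "\<dots> = (\<Sum>p<N. x p ^ 2) - 2 * (\<Sum>p<N. x p * y p) + (\<Sum>p<N. y p ^ 2)"
    by (simp add: power2_diff sum.distrib sum_subtractf sum_distrib_left ac_simps)
  finally show ?thesis using A B unfolding c_def by simp
qed

lemma parseval:
  assumes "orthr N P"
  shows "(\<Sum>j<N. (\<Sum>p<N. P p j * x p)^2) = (\<Sum>p<N. x p ^ 2)"
proof -
  have "(\<Sum>j<N. (\<Sum>p<N. P p j * x p)^2) = (\<Sum>j<N. \<Sum>p<N. \<Sum>q<N. x p * x q * (P p j * P q j))"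
    unfolding sq_sum by (simp add: ac_simps)
  also have "\<dots> = (\<Sum>p<N. \<Sum>q<N. \<Sum>j<N. x p * x q * (P p j * P q j))" by (rule sum_swap3)
  also have "\<dots> = (\<Sum>p<N. \<Sum>q<N. x p * x q * (\<Sum>j<N. P p j * P q j))"
    by (simp add: sum_distrib_left)
  also have "\<dots> = (\<Sum>p<N. \<Sum>q<N. x p * x q * (if p = q then 1 else 0))"
    using assms unfolding orthr_def by (intro sum.cong refl) simp
  also have "\<dots> = (\<Sum>p<N. x p * x p)" by (intro sum.cong refl) (simp add: sum_delta_right')
  finally show ?thesis by (simp add: power2_eq_square)
qed

lemma quadform:
  assumes "decomp N M P l"
  shows "(\<Sum>p<N. \<Sum>q<N. x p * M p q * x q) = (\<Sum>j<N. l j * (\<Sum>p<N. P p j * x p)^2)"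
proof -
  have "(\<Sum>p<N. \<Sum>q<N. x p * M p q * x q) = (\<Sum>p<N. \<Sum>q<N. \<Sum>j<N. l j * ((P p j * x p) * (P q j * x q)))"
    using assms unfolding decomp_def by (intro sum.cong refl) (simp add: sum_distrib_left sum_distrib_right ac_simps)
  also have "\<dots> = (\<Sum>j<N. \<Sum>p<N. \<Sum>q<N. l j * ((P p j * x p) * (P q j * x q)))" by (rule sum_swap3[symmetric])
  also have "\<dots> = (\<Sum>j<N. l j * (\<Sum>p<N. \<Sum>q<N. (P p j * x p) * (P q j * x q)))"
    by (simp add: sum_distrib_left)
  also have "\<dots> = (\<Sum>j<N. l j * (\<Sum>p<N. P p j * x p)^2)" unfolding sq_sum ..
  finally show ?thesis .
qed



lemma sum_2n: "(\<Sum>p<2*(n::nat). f p) = (\<Sum>a<n. f a + (f (a+n)::real))"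
proof -
  have U: "{..<2*n} = {0..<n} \<union> {0+n..<n+n}" by auto
  have "(\<Sum>p<2*n. f p) = (\<Sum>p\<in>{0..<n}. f p) + (\<Sum>p\<in>{0+n..<n+n}. f p)"
    unfolding U by (rule sum.union_disjoint) auto
  also have "(\<Sum>p\<in>{0+n..<n+n}. f p) = (\<Sum>a\<in>{0..<n}. f (a+n))" by (rule sum.shift_bounds_nat_ivl)
  finally show ?thesis by (simp add: sum.distrib atLeast0LessThan)
qed

lemma card_sum: "real (card {u \<in> {0..<(n::nat)}. P u}) = (\<Sum>u<n. if P u then 1 else 0)"
proof -
  have "card {u \<in> {0..<n}. P u} = (\<Sum>u\<in>{u \<in> {0..<n}. P u}. 1)" by simp
  also have "\<dots> = (\<Sum>u\<in>{0..<n}. if P u then 1 else 0)" by (rule sum.inter_filter) simp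
  also have "\<dots> = (\<Sum>u<n. if P u then 1 else 0)" by (simp add: atLeast0LessThan)
  finally have "card {u \<in> {0..<n}. P u} = (\<Sum>u<n. if P u then 1 else 0)" .
  hence "real (card {u \<in> {0..<n}. P u}) = (\<Sum>u<n. real (if P u then 1 else 0))" by (simp only: of_nat_sum)
  thus ?thesis by (simp add: if_distrib cong: if_cong)
qed

definition Af :: "(nat \<Rightarrow> nat \<Rightarrow> bool) \<Rightarrow> nat \<Rightarrow> nat \<Rightarrow> real" where
  "Af E a b = (if E a b then 1 else 0)"

lemma degree_sum: "real (degree n E a) = (\<Sum>b<n. Af E a b)"
  unfolding degree_def Af_def by (rule card_sum)

lemma psd:
  assumes G: "simple_graph n E" and s: "s = 1 \<or> s = -1"
  shows "- s * (\<Sum>a<n. \<Sum>b<n. x a * Af E a b * x b) \<le> (\<Sum>a<n. real (degree n E a) * x a ^ 2)"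
proof -
  have symA: "Af E a b = Af E b a" if "a < n" "b < n" for a b
    using G that unfolding simple_graph_def Af_def by auto
  have ss: "s * s = 1" using s by auto
  have e0: "0 \<le> (\<Sum>a<n. \<Sum>b<n. Af E a b * (x a + s * x b)^2)"
    by (intro sum_nonneg) (simp add: Af_def)
  have e1: "(\<Sum>a<n. \<Sum>b<n. Af E a b * (x a + s * x b)^2) = (\<Sum>a<n. \<Sum>b<n. Af E a b * x a ^ 2) + (\<Sum>a<n. \<Sum>b<n. Af E a b * x b ^ 2)
      + 2 * s * (\<Sum>a<n. \<Sum>b<n. x a * Af E a b * x b)"
    by (simp add: power2_sum sum.distrib sum_distrib_left algebra_simps power_mult_distrib ss
        power2_eq_square[of s])
  have e2: "(\<Sum>a<n. \<Sum>b<n. Af E a b * x b ^ 2) = (\<Sum>b<n. \<Sum>a<n. Af E b a * x b ^ 2)"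
    by (subst sum.swap) (intro sum.cong refl, simp add: symA)
  have e3: "(\<Sum>b<n. \<Sum>a<n. Af E b a * x b ^ 2) = (\<Sum>a<n. real (degree n E a) * x a ^ 2)"
    by (simp add: degree_sum sum_distrib_right)
  have e4: "(\<Sum>a<n. \<Sum>b<n. Af E a b * x a ^ 2) = (\<Sum>a<n. real (degree n E a) * x a ^ 2)"
    by (simp add: degree_sum sum_distrib_right)
  have "0 \<le> 2 * (\<Sum>a<n. real (degree n E a) * x a ^ 2) + 2 * s * (\<Sum>a<n. \<Sum>b<n. x a * Af E a b * x b)"
    using e0 e1 e2 e3 e4 by linarith
  thus ?thesis by simp
qed

lemma double_degree:
  assumes p: "p < 2*n"
  shows "real (degree (2*n) (double_edges n E) p) = 2 * real (degree n E (p mod n))"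
proof -
  have "real (degree (2*n) (double_edges n E) p) = (\<Sum>u<2*n. Af E (p mod n) (u mod n))"
    unfolding degree_def double_edges_def Af_def by (rule card_sum)
  also have "\<dots> = (\<Sum>a<n. Af E (p mod n) a + Af E (p mod n) a)" unfolding sum_2n
    by (intro sum.cong refl) simp
  also have "\<dots> = 2 * real (degree n E (p mod n))" unfolding degree_sum by (simp add: sum_distrib_left)
  finally show ?thesis .
qed

lemma Aalpha_entry:
  assumes p: "p < 2*n" and q: "q < 2*n"
  shows "A_alpha \<alpha> (2*n) (double_edges n E) $$ (p,q) =
    \<alpha> * (if p = q then 2 * real (degree n E (p mod n)) else 0) + (1 - \<alpha>) * Af E (p mod n) (q mod n)"
  using p q double_degree[OF p, of E] double_degree[OF q, of E]
  by (simp add: A_alpha_def deg_mat_def adj_mat_def double_edges_def Af_def)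

lemma adj_entry:
  assumes "a < n" "b < n"
  shows "adj_mat n E $$ (a,b) = Af E a b"
  using assms by (simp add: adj_mat_def Af_def)



lemma weights_rows:
  assumes "orthr N P" "K \<le> N" "p < N"
  shows "0 \<le> (\<Sum>j<K. P p j ^ 2) \<and> (\<Sum>j<K. P p j ^ 2) \<le> 1"
proof -
  have "(\<Sum>j<K. P p j ^ 2) \<le> (\<Sum>j<N. P p j ^ 2)"
    by (rule sum_mono2) (use assms(2) in auto)
  also have "\<dots> = 1" using assms(1,3) unfolding orthr_def by (simp add: power2_eq_square)
  finally show ?thesis by (simp add: sum_nonneg)
qed

lemma weights_cols:
  assumes "orthc N P" "K \<le> N"
  shows "(\<Sum>p<N. \<Sum>j<K. P p j ^ 2) = real K"
proof -
  have "(\<Sum>p<N. \<Sum>j<K. P p j ^ 2) = (\<Sum>j<K. \<Sum>p<N. P p j * P p j)"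
    by (subst sum.swap) (simp add: power2_eq_square)
  also have "\<dots> = (\<Sum>j<K. 1)" using assms unfolding orthc_def by (intro sum.cong refl) auto
  finally show ?thesis by simp
qed

lemma lemX:
  fixes lam w D :: "nat \<Rightarrow> real"
  assumes sd: "sortd n lam" and w: "\<forall>j<n. 0 \<le> w j \<and> w j \<le> 1" and sw: "(\<Sum>j<n. w j) \<le> real k"
    and D0: "\<forall>j<n. 0 \<le> D j \<and> lam j \<le> D j \<and> - lam j \<le> D j"
  shows "(\<Sum>j<n. lam j * w j) \<le> (if k < n then (\<Sum>j<k. lam j) else 0) + (\<Sum>j<min k n. D j)"
proof -
  define K where "K = min k n"
  define lp where "lp = (\<lambda>j. max (lam j) 0)"
  have s1: "(\<Sum>j<n. lam j * w j) \<le> (\<Sum>j<n. lp j * w j)"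
    by (rule sum_mono) (use w in \<open>auto simp: lp_def intro: mult_right_mono\<close>)
  have s2: "(\<Sum>j<n. lp j * w j) \<le> (\<Sum>j<K. lp j)"
  proof (cases "K = 0")
    case True
    then show ?thesis
    proof (cases "n = 0")
      case False
      hence k0: "k = 0" using True unfolding K_def by simp
      have "(\<Sum>j<n. w j) \<ge> 0" using w by (intro sum_nonneg) auto
      hence "(\<Sum>j<n. w j) = 0" using sw k0 by simp
      hence "\<forall>j\<in>{..<n}. w j = 0"
        using w by (subst sum_nonneg_eq_0_iff[symmetric]) auto
      then show ?thesis using True by simp
    qed simp
  next
    case False
    define t0 where "t0 = lp (K - 1)"
    have t0: "t0 \<ge> 0" unfolding t0_def lp_def by simp
    have Kn: "K \<le> n" unfolding K_def by simp
    have swK: "(\<Sum>j<n. w j) \<le> real K"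
    proof -
      have "(\<Sum>j<n. w j) \<le> (\<Sum>j<n. 1)" by (rule sum_mono) (use w in auto)
      thus ?thesis using sw unfolding K_def by auto
    qed
    have "(\<Sum>j<n. lp j * w j) \<le> t0 * real K + (\<Sum>j<n. max (lp j - t0) 0)"
      by (rule threshold[OF _ _ swK t0]) (use w in auto)
    also have "(\<Sum>j<n. max (lp j - t0) 0) = (\<Sum>j<K. lp j - t0)"
    proof -
      have U: "{..<n} = {..<K} \<union> {K..<n}" using Kn by auto
      have "(\<Sum>j<n. max (lp j - t0) 0) = (\<Sum>j<K. max (lp j - t0) 0) + (\<Sum>j\<in>{K..<n}. max (lp j - t0) 0)"
        unfolding U by (rule sum.union_disjoint) auto
      also have "(\<Sum>j\<in>{K..<n}. max (lp j - t0) 0) = 0"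
      proof (rule sum.neutral, intro ballI)
        fix j assume j: "j \<in> {K..<n}"
        have "lam j \<le> lam (K - 1)" using sd j False unfolding sortd_def by auto
        hence "lp j \<le> t0" unfolding lp_def t0_def by auto
        thus "max (lp j - t0) 0 = 0" by simp
      qed
      also have "(\<Sum>j<K. max (lp j - t0) 0) = (\<Sum>j<K. lp j - t0)"
      proof (rule sum.cong[OF refl])
        fix j assume j: "j \<in> {..<K}"
        have "lam (K - 1) \<le> lam j" using sd j False Kn unfolding sortd_def by auto
        hence "t0 \<le> lp j" unfolding lp_def t0_def by auto
        thus "max (lp j - t0) 0 = lp j - t0" by simp
      qed
      finally show ?thesis by simp
    qed
    also have "t0 * real K + (\<Sum>j<K. lp j - t0) = (\<Sum>j<K. lp j)" by (simp add: sum_subtractf)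
    finally show ?thesis .
  qed
  have s3: "(\<Sum>j<K. lp j) \<le> (if k < n then (\<Sum>j<k. lam j) else 0) + (\<Sum>j<K. D j)"
  proof (cases "k < n")
    case True
    hence K: "K = k" unfolding K_def by simp
    have "(\<Sum>j<K. lp j) \<le> (\<Sum>j<K. lam j + D j)"
    proof (rule sum_mono)
      fix j assume "j \<in> {..<K}"
      hence "j < n" using True K by simp
      hence "0 \<le> D j" "- lam j \<le> D j" using D0 by auto
      thus "lp j \<le> lam j + D j" unfolding lp_def by auto
    qed
    thus ?thesis using True K by (simp add: sum.distrib)
  next
    case False
    hence K: "K = n" unfolding K_def by simp
    have "(\<Sum>j<K. lp j) \<le> (\<Sum>j<K. D j)"
      by (rule sum_mono) (use D0 K in \<open>auto simp: lp_def\<close>)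
    thus ?thesis using False by simp
  qed
  show ?thesis using s1 s2 s3 unfolding K_def by linarith
qed



lemma main_bound:
  assumes G: "simple_graph n E" and a0: "0 \<le> \<alpha>" and a1: "\<alpha> \<le> 1" and k: "k \<le> 2*n" and t: "t \<ge> 0"
  shows "S k (A_alpha \<alpha> (2*n) (double_edges n E)) \<le>
    2 * (t * real k + 2 * (\<Sum>a<n. max (real (degree n E a) - t) 0))
    + 2 * (1 - \<alpha>) * (if k < n then S k (adj_mat n E) else 0)"
proof -
  define N where "N = 2*n"
  define MM where "MM = A_alpha \<alpha> (2*n) (double_edges n E)"
  define deg where "deg = (\<lambda>a. real (degree n E a))"
  define B where "B = t * real k + 2 * (\<Sum>a<n. max (deg a - t) 0)"
  define X0 where "X0 = (if k < n then S k (adj_mat n E) else 0)"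
  have kN: "k \<le> N" using k unfolding N_def .
  have MMc: "MM \<in> carrier_mat N N" unfolding MM_def N_def A_alpha_def deg_mat_def adj_mat_def by simp
  have ent: "MM$$(p,q) = \<alpha> * (if p = q then 2 * deg (p mod n) else 0) + (1-\<alpha>) * Af E (p mod n) (q mod n)"
    if "p < N" "q < N" for p q
    using Aalpha_entry[of p n q \<alpha> E] that unfolding MM_def N_def deg_def by simp
  have symAf: "Af E a b = Af E b a" if "a < n" "b < n" for a b
    using G that unfolding simple_graph_def Af_def by auto
  have pmod: "p mod n < n" if "p < N" for p using that unfolding N_def by auto
  have MMsym: "\<forall>p<N. \<forall>q<N. MM$$(p,q) = MM$$(q,p)" using ent symAf pmod by auto
  obtain U mu where oU: "orthc N U" and rU: "orthr N U" and dU: "decomp N (\<lambda>i j. MM$$(i,j)) U mu"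
    and eU: "eigvals MM = map mu [0..<N]" using spec_mat[OF MMc MMsym] by blast
  have Sk: "S k MM = (\<Sum>i<k. mu i)" unfolding S_def eU using kN by (intro sum.cong refl) auto
  define DPi where "DPi = (\<lambda>i. \<Sum>p<N. 2 * deg (p mod n) * U p i ^ 2)"
  define APi where "APi = (\<lambda>i. \<Sum>p<N. \<Sum>q<N. U p i * Af E (p mod n) (q mod n) * U q i)"
  have mu_eq: "mu i = \<alpha> * DPi i + (1 - \<alpha>) * APi i" if i: "i < N" for i
  proof -
    have "mu i = (\<Sum>p<N. U p i * (mu i * U p i))"
      using oU i unfolding orthc_def by (simp add: sum_distrib_left[symmetric] ac_simps)
    also have "\<dots> = (\<Sum>p<N. U p i * (\<Sum>q<N. MM$$(p,q) * U q i))"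
      using eigcol[OF oU dU i] by simp
    also have "\<dots> = (\<Sum>p<N. \<alpha> * (2 * deg (p mod n) * U p i ^ 2) + (1 - \<alpha>) * (\<Sum>q<N. U p i * Af E (p mod n) (q mod n) * U q i))"
    proof (rule sum.cong[OF refl])
      fix p assume p: "p \<in> {..<N}"
      have "(\<Sum>q<N. MM$$(p,q) * U q i) = (\<Sum>q<N. \<alpha> * (U q i * (if p = q then 2 * deg (p mod n) else 0)) + (1-\<alpha>) * (Af E (p mod n) (q mod n) * U q i))"
      proof (rule sum.cong[OF refl])
        fix q assume q: "q \<in> {..<N}"
        have "p < N" "q < N" using p q by auto
        show "MM$$(p,q) * U q i = \<alpha> * (U q i * (if p = q then 2 * deg (p mod n) else 0)) + (1-\<alpha>) * (Af E (p mod n) (q mod n) * U q i)"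
          unfolding ent[OF \<open>p < N\<close> \<open>q < N\<close>] by (simp add: algebra_simps)
      qed
      also have "\<dots> = \<alpha> * (U p i * (2 * deg (p mod n))) + (1-\<alpha>) * (\<Sum>q<N. Af E (p mod n) (q mod n) * U q i)"
        using p by (simp add: sum.distrib sum_distrib_left[symmetric] sum_delta_right')
      finally show "U p i * (\<Sum>q<N. MM$$(p,q) * U q i) = \<alpha> * (2 * deg (p mod n) * U p i ^ 2) + (1 - \<alpha>) * (\<Sum>q<N. U p i * Af E (p mod n) (q mod n) * U q i)"
        by (simp add: algebra_simps power2_eq_square sum_distrib_left)
    qed
    also have "\<dots> = \<alpha> * DPi i + (1 - \<alpha>) * APi i"
      unfolding DPi_def APi_def by (simp add: sum.distrib sum_distrib_left)
    finally show ?thesis .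
  qed
  have S_split: "S k MM = \<alpha> * (\<Sum>i<k. DPi i) + (1 - \<alpha>) * (\<Sum>i<k. APi i)"
    unfolding Sk using mu_eq kN by (simp add: sum.distrib sum_distrib_left)
  have DP: "(\<Sum>i<k. DPi i) \<le> 2 * B"
  proof -
    have "(\<Sum>i<k. DPi i) = (\<Sum>p<N. 2 * deg (p mod n) * (\<Sum>i<k. U p i ^ 2))"
      unfolding DPi_def by (subst sum.swap) (simp add: sum_distrib_left)
    also have "\<dots> \<le> (2 * t) * real k + (\<Sum>p<N. max (2 * deg (p mod n) - 2 * t) 0)"
    proof (rule threshold)
      show "sum (\<lambda>p. \<Sum>i<k. U p i ^ 2) {..<N} \<le> real k" using weights_cols[OF oU kN] by simp
    qed (use t weights_rows[OF rU kN] in auto)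
    also have "(\<Sum>p<N. max (2 * deg (p mod n) - 2 * t) 0) = 4 * (\<Sum>a<n. max (deg a - t) 0)"
    proof -
      have "(\<Sum>p<N. max (2 * deg (p mod n) - 2 * t) 0) = (\<Sum>a<n. max (2 * deg (a mod n) - 2 * t) 0 + max (2 * deg ((a+n) mod n) - 2 * t) 0)"
        unfolding N_def by (rule sum_2n)
      also have "\<dots> = (\<Sum>a<n. 4 * max (deg a - t) 0)" by (intro sum.cong refl) (auto simp: max_def)
      finally show ?thesis by (simp add: sum_distrib_left)
    qed
    finally show ?thesis unfolding B_def by simp
  qed
  define Am where "Am = adj_mat n E"
  have Amc: "Am \<in> carrier_mat n n" unfolding Am_def adj_mat_def by simp
  have Amsym: "\<forall>a<n. \<forall>b<n. Am$$(a,b) = Am$$(b,a)" using symAf adj_entry unfolding Am_def by metis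
  obtain V lam where oV: "orthc n V" and rV: "orthr n V" and dV0: "decomp n (\<lambda>i j. Am$$(i,j)) V lam"
    and sV: "sortd n lam" and eV: "eigvals Am = map lam [0..<n]" using spec_mat[OF Amc Amsym] by blast
  have dV: "decomp n (Af E) V lam" using dV0 adj_entry unfolding decomp_def Am_def by metis
  have X0: "X0 = (if k < n then (\<Sum>j<k. lam j) else 0)"
    unfolding X0_def S_def Am_def[symmetric] eV by (auto intro!: sum.cong)
  define y where "y = (\<lambda>i a. U a i + U (a+n) i)"
  have APi_eq: "APi i = (\<Sum>j<n. lam j * (\<Sum>a<n. V a j * y i a)^2)" for i
  proof -
    have inner: "(\<Sum>q<N. U p i * Af E (p mod n) (q mod n) * U q i) = (\<Sum>b<n. U p i * Af E (p mod n) b * y i b)" for p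
      unfolding N_def sum_2n y_def by (intro sum.cong refl) (simp add: algebra_simps)
    have "APi i = (\<Sum>p<N. \<Sum>b<n. U p i * Af E (p mod n) b * y i b)" unfolding APi_def inner ..
    also have "\<dots> = (\<Sum>a<n. \<Sum>b<n. y i a * Af E a b * y i b)"
      unfolding N_def sum_2n y_def by (simp add: sum.distrib[symmetric] algebra_simps)
    also have "\<dots> = (\<Sum>j<n. lam j * (\<Sum>a<n. V a j * y i a)^2)" by (rule quadform[OF dV])
    finally show ?thesis .
  qed
  define W where "W = (\<lambda>j. \<Sum>i<k. (\<Sum>a<n. V a j * y i a)^2)"
  have AP_eq: "(\<Sum>i<k. APi i) = (\<Sum>j<n. lam j * W j)"
    unfolding APi_eq W_def by (subst sum.swap) (simp add: sum_distrib_left)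
  have W2: "W j \<le> 2" if j: "j < n" for j
  proof -
    define Z where "Z = (\<lambda>p. V (p mod n) j)"
    have "W j = (\<Sum>i<k. (\<Sum>p<N. U p i * Z p)^2)"
      unfolding W_def N_def sum_2n Z_def y_def by (intro sum.cong refl) (simp add: algebra_simps)
    also have "\<dots> \<le> (\<Sum>p<N. Z p ^ 2)"
      by (rule bessel) (use oU kN in \<open>auto simp: orthc_def\<close>)
    also have "\<dots> = 2 * (\<Sum>a<n. V a j * V a j)"
      unfolding N_def sum_2n Z_def by (simp add: power2_eq_square sum_distrib_left)
    also have "\<dots> = 2" using oV j unfolding orthc_def by simp
    finally show ?thesis .
  qed
  have W0: "0 \<le> W j" for j unfolding W_def by (simp add: sum_nonneg)
  have SW: "(\<Sum>j<n. W j) \<le> 2 * real k"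
  proof -
    have "(\<Sum>j<n. W j) = (\<Sum>i<k. \<Sum>j<n. (\<Sum>a<n. V a j * y i a)^2)"
      unfolding W_def by (rule sum.swap)
    also have "\<dots> = (\<Sum>i<k. \<Sum>a<n. y i a ^ 2)" by (simp add: parseval[OF rV] mult.commute)
    also have "\<dots> \<le> (\<Sum>i<k. 2 * (\<Sum>a<n. U a i ^ 2 + U (a+n) i ^ 2))"
    proof (rule sum_mono)
      fix i
      have "(\<Sum>a<n. y i a ^ 2) \<le> (\<Sum>a<n. 2 * (U a i ^ 2 + U (a+n) i ^ 2))"
      proof (rule sum_mono)
        fix a
        have "0 \<le> (U a i - U (a+n) i)^2" by simp
        thus "y i a ^ 2 \<le> 2 * (U a i ^ 2 + U (a+n) i ^ 2)" unfolding y_def by (simp add: power2_eq_square algebra_simps)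
      qed
      thus "(\<Sum>a<n. y i a ^ 2) \<le> 2 * (\<Sum>a<n. U a i ^ 2 + U (a+n) i ^ 2)" by (simp add: sum_distrib_left)
    qed
    also have "\<dots> = (\<Sum>i<k. 2 * (\<Sum>p<N. U p i * U p i))"
      unfolding N_def sum_2n by (simp add: power2_eq_square)
    also have "\<dots> = (\<Sum>i<k. 2)" using oU kN unfolding orthc_def by (intro sum.cong refl) auto
    finally show ?thesis by simp
  qed
  define D where "D = (\<lambda>j. \<Sum>a<n. deg a * V a j ^ 2)"
  have lamq: "lam j = (\<Sum>a<n. \<Sum>b<n. V a j * Af E a b * V b j)" if j: "j < n" for j
  proof -
    have "(\<Sum>a<n. \<Sum>b<n. V a j * Af E a b * V b j) = (\<Sum>a<n. V a j * (\<Sum>b<n. Af E a b * V b j))"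
      by (simp add: sum_distrib_left ac_simps)
    also have "\<dots> = (\<Sum>a<n. V a j * (lam j * V a j))" using eigcol[OF oV dV j] by simp
    also have "\<dots> = lam j" using oV j unfolding orthc_def by (simp add: sum_distrib_left[symmetric] ac_simps)
    finally show ?thesis by simp
  qed
  have Dprops: "\<forall>j<n. 0 \<le> D j \<and> lam j \<le> D j \<and> - lam j \<le> D j"
  proof (intro allI impI conjI)
    fix j assume j: "j < n"
    show "0 \<le> D j" unfolding D_def deg_def by (simp add: sum_nonneg)
    show "lam j \<le> D j" using psd[OF G, of "-1" "\<lambda>a. V a j"] lamq[OF j] unfolding D_def deg_def by simp
    show "- lam j \<le> D j" using psd[OF G, of 1 "\<lambda>a. V a j"] lamq[OF j] unfolding D_def deg_def by simp
  qed
  have DK: "(\<Sum>j<min k n. D j) \<le> B"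
  proof -
    define K where "K = min k n"
    have Kn: "K \<le> n" unfolding K_def by simp
    have "(\<Sum>j<K. D j) = (\<Sum>a<n. deg a * (\<Sum>j<K. V a j ^ 2))"
      unfolding D_def by (subst sum.swap) (simp add: sum_distrib_left)
    also have "\<dots> \<le> t * real k + (\<Sum>a<n. max (deg a - t) 0)"
    proof (rule threshold)
      show "sum (\<lambda>a. \<Sum>j<K. V a j ^ 2) {..<n} \<le> real k" using weights_cols[OF oV Kn] unfolding K_def by simp
    qed (use t weights_rows[OF rV Kn] in auto)
    also have "\<dots> \<le> B" unfolding B_def by (simp add: sum_nonneg)
    finally show ?thesis unfolding K_def .
  qed
  have AP: "(\<Sum>i<k. APi i) \<le> 2 * (X0 + B)"
  proof -
    have "(\<Sum>j<n. lam j * (W j / 2)) \<le> (if k < n then (\<Sum>j<k. lam j) else 0) + (\<Sum>j<min k n. D j)"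
      by (rule lemX[OF sV _ _ Dprops]) (use W0 W2 SW in \<open>auto simp: sum_divide_distrib[symmetric]\<close>)
    hence "(\<Sum>j<n. lam j * (W j / 2)) \<le> X0 + B" using DK X0 by linarith
    hence "2 * (\<Sum>j<n. lam j * (W j / 2)) \<le> 2 * (X0 + B)" by simp
    moreover have "(\<Sum>i<k. APi i) = 2 * (\<Sum>j<n. lam j * (W j / 2))"
      unfolding AP_eq by (simp add: sum_distrib_left)
    ultimately show ?thesis by simp
  qed
  have "S k MM \<le> \<alpha> * (2 * B) + (1 - \<alpha>) * (2 * (X0 + B))"
    unfolding S_split using DP AP a0 a1 by (intro add_mono mult_left_mono) auto
  also have "\<dots> = 2 * B + 2 * (1 - \<alpha>) * X0" by (simp add: algebra_simps)
  finally show ?thesis unfolding MM_def B_def X0_def deg_def .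
qed



lemma degseq_len: "length (degseq n E) = n" unfolding degseq_def by simp

lemma degseq_sorted:
  assumes "i \<le> j" "j < n"
  shows "degseq n E ! j \<le> degseq n E ! i"
proof -
  let ?xs = "sort (map (degree n E) [0..<n])"
  have len: "length ?xs = n" by simp
  have s: "sorted ?xs" by simp
  have "?xs ! (n - Suc j) \<le> ?xs ! (n - Suc i)"
    using s assms len by (intro sorted_nth_mono) auto
  thus ?thesis unfolding degseq_def using assms by (simp add: rev_nth)
qed

lemma sum_list_upt: "sum_list (map g [0..<n]) = (\<Sum>a<n. (g a::real))"
  by (induction n) auto

lemma degseq_sum: "(\<Sum>a<n. f (degree n E a)) = (\<Sum>i<n. (f (degseq n E ! i) :: real))"
proof -
  have m: "mset (degseq n E) = mset (map (degree n E) [0..<n])" unfolding degseq_def by simp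
  have "(\<Sum>i<n. f (degseq n E ! i)) = sum_list (map f (degseq n E))"
    by (simp add: sum_list_sum_nth degseq_len atLeast0LessThan)
  also have "\<dots> = sum_list (map f (map (degree n E) [0..<n]))"
    by (metis m mset_map sum_mset_sum_list)
  also have "\<dots> = (\<Sum>a<n. f (degree n E a))" by (simp add: sum_list_upt[of "\<lambda>a. f (degree n E a)"] o_def)
  finally show ?thesis by simp
qed

lemma Bval:
  fixes E :: "nat \<Rightarrow> nat \<Rightarrow> bool"
  assumes k1: "1 \<le> k" and k2: "k \<le> 2*n"
  defines "t \<equiv> real (degseq n E ! ((k - 1) div 2))"
  shows "2 * (t * real k + 2 * (\<Sum>a<n. max (real (degree n E a) - t) 0)) =
    (if even k then 4 * (\<Sum>i=1..k div 2. dg n E i)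
     else 4 * (\<Sum>i=1..(k - 1) div 2. dg n E i) + 2 * dg n E ((k + 1) div 2))"
proof -
  define ds where "ds = (\<lambda>i. real (degseq n E ! i))"
  define r where "r = (k - 1) div 2"
  have rn: "r < n" using k1 k2 unfolding r_def by linarith
  have t: "t = ds r" unfolding t_def ds_def r_def ..
  have "(\<Sum>a<n. max (real (degree n E a) - t) 0) = (\<Sum>i<n. max (ds i - t) 0)"
    unfolding ds_def by (rule degseq_sum)
  also have "\<dots> = (\<Sum>i<r. ds i - t)"
  proof -
    have U: "{..<n} = {..<r} \<union> {r..<n}" using rn by auto
    have "(\<Sum>i<n. max (ds i - t) 0) = (\<Sum>i<r. max (ds i - t) 0) + (\<Sum>i\<in>{r..<n}. max (ds i - t) 0)"
      unfolding U by (rule sum.union_disjoint) auto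
    also have "(\<Sum>i\<in>{r..<n}. max (ds i - t) 0) = 0"
    proof (rule sum.neutral, intro ballI)
      fix i assume i: "i \<in> {r..<n}"
      have "degseq n E ! i \<le> degseq n E ! r" using i by (intro degseq_sorted) auto
      thus "max (ds i - t) 0 = 0" unfolding t ds_def by simp
    qed
    also have "(\<Sum>i<r. max (ds i - t) 0) = (\<Sum>i<r. ds i - t)"
    proof (rule sum.cong[OF refl])
      fix i assume i: "i \<in> {..<r}"
      have "degseq n E ! r \<le> degseq n E ! i" using i rn by (intro degseq_sorted) auto
      thus "max (ds i - t) 0 = ds i - t" unfolding t ds_def by simp
    qed
    finally show ?thesis by simp
  qed
  finally have e1: "(\<Sum>a<n. max (real (degree n E a) - t) 0) = (\<Sum>i<r. ds i) - real r * t"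
    by (simp add: sum_subtractf)
  have dgs: "(\<Sum>i=1..m. dg n E i) = (\<Sum>i<m. ds i)" for m
    unfolding dg_def ds_def by (simp add: sum.atLeast1_atMost_eq)
  show ?thesis
  proof (cases "even k")
    case True
    then obtain m where m: "k = 2 * m" by auto
    hence m1: "m \<ge> 1" and rm: "r = m - 1" using k1 unfolding r_def by auto
    from m1 obtain m' where m': "m = Suc m'" by (cases m) auto
    hence rm': "r = m'" using rm by simp
    have sm: "(\<Sum>i<m. ds i) = (\<Sum>i<r. ds i) + ds r" using m' rm' by simp
    have kr: "real k = 2 * real r + 2" using m m' rm' by simp
    have "2 * (t * real k + 2 * (\<Sum>a<n. max (real (degree n E a) - t) 0)) = 4 * (\<Sum>i<m. ds i)"
      using e1 sm kr t by (simp add: algebra_simps)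
    moreover have "k div 2 = m" using m by simp
    ultimately show ?thesis using True dgs[of m] by simp
  next
    case False
    then obtain m where m: "k = 2 * m + 1" by (metis oddE)
    hence rm: "r = m" unfolding r_def by simp
    have "(k + 1) div 2 = Suc m" using m by simp
    moreover have "dg n E (Suc m) = ds m" unfolding dg_def ds_def by simp
    moreover have "(k - 1) div 2 = m" using m by simp
    moreover have kr: "real k = 2 * real r + 1" using m rm by simp
    moreover have "2 * (t * real k + 2 * (\<Sum>a<n. max (real (degree n E a) - t) 0)) = 4 * (\<Sum>i<m. ds i) + 2 * ds m"
      using e1 kr t rm by (simp add: algebra_simps)
    ultimately show ?thesis using False dgs[of m] by simp
  qed
qed


theorem theorem6p4:
  fixes n k :: nat and E :: "nat \<Rightarrow> nat \<Rightarrow> bool" and \<alpha> :: real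
  assumes "simple_graph n E"
    and "0 \<le> \<alpha>" and "\<alpha> \<le> 1"
  shows "(1 < k \<and> k < n \<and> even k \<longrightarrow>
           S k (A_alpha \<alpha> (2 * n) (double_edges n E))
             \<le> 4 * (\<Sum>i=1..k div 2. dg n E i) + 2 * (1 - \<alpha>) * S k (adj_mat n E))
       \<and> (1 \<le> k \<and> k < n \<and> odd k \<longrightarrow>
           S k (A_alpha \<alpha> (2 * n) (double_edges n E))
             \<le> 4 * (\<Sum>i=1..(k - 1) div 2. dg n E i) + 2 * dg n E ((k + 1) div 2)
                + 2 * (1 - \<alpha>) * S k (adj_mat n E))
       \<and> (n \<le> k \<and> k \<le> 2 * n \<and> even k \<longrightarrow>
           S k (A_alpha \<alpha> (2 * n) (double_edges n E))
             \<le> 4 * (\<Sum>i=1..k div 2. dg n E i))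
       \<and> (n \<le> k \<and> k \<le> 2 * n \<and> odd k \<longrightarrow>
           S k (A_alpha \<alpha> (2 * n) (double_edges n E))
             \<le> 4 * (\<Sum>i=1..(k - 1) div 2. dg n E i) + 2 * dg n E ((k + 1) div 2))"
proof -
  let ?MM = "A_alpha \<alpha> (2 * n) (double_edges n E)"
  have gen: "S k ?MM \<le> (if even k then 4 * (\<Sum>i=1..k div 2. dg n E i)
     else 4 * (\<Sum>i=1..(k - 1) div 2. dg n E i) + 2 * dg n E ((k + 1) div 2))
     + 2 * (1 - \<alpha>) * (if k < n then S k (adj_mat n E) else 0)"
    if k1: "1 \<le> k" and k2: "k \<le> 2 * n"
  proof -
    define t where "t = real (degseq n E ! ((k - 1) div 2))"
    have t0: "t \<ge> 0" unfolding t_def by simp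
    show ?thesis using main_bound[OF assms k2 t0] Bval[OF k1 k2, of E] unfolding t_def by simp
  qed
  show ?thesis
  proof (intro conjI impI)
    assume h: "1 < k \<and> k < n \<and> even k"
    thus "S k ?MM \<le> 4 * (\<Sum>i=1..k div 2. dg n E i) + 2 * (1 - \<alpha>) * S k (adj_mat n E)"
      using gen by simp
  next
    assume h: "1 \<le> k \<and> k < n \<and> odd k"
    thus "S k ?MM \<le> 4 * (\<Sum>i=1..(k - 1) div 2. dg n E i) + 2 * dg n E ((k + 1) div 2)
                + 2 * (1 - \<alpha>) * S k (adj_mat n E)"
      using gen by simp
  next
    assume h: "n \<le> k \<and> k \<le> 2 * n \<and> even k"
    show "S k ?MM \<le> 4 * (\<Sum>i=1..k div 2. dg n E i)"
    proof (cases "k = 0")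
      case True
      thus ?thesis by (simp add: S_def)
    next
      case False
      thus ?thesis using gen h by simp
    qed
  next
    assume h: "n \<le> k \<and> k \<le> 2 * n \<and> odd k"
    hence "1 \<le> k" by (cases k) auto
    thus "S k ?MM \<le> 4 * (\<Sum>i=1..(k - 1) div 2. dg n E i) + 2 * dg n E ((k + 1) div 2)"
      using gen h by simp
  qed
qed

end
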